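(* For all integers $a\ge1$, $b\ge2$ and every positive integer $t$, $$i((1,1,a,b),t)+i((1,1,b-1,a+1),t)=(t+2)\,F(a+1,b,0,t).$$
   Context: For $S,T\subseteq[n]$, write $T\le S$ if $|T|=|S|$ and the $i$-th smallest element of $T$ is at most the $i$-th smallest element of $S$ for each $i$. The Schubert matroid $\mathrm{SM}_n(S)$ is the matroid on $[n]$ with bases $\{T\subseteq[n]:T\le S\}$; $i(M,t)$ is the number of lattice points in the $t$-th dilate of the matroid polytope $\mathrm{conv}\{\sum_{b\in B}e_b: B\text{ a basis of }M\}$. For a sequence $r=(r_1,\dots,r_{2m})$ of integers with $r_1\ge0$, $r_i>0$ for $i\ge2$, let $n=\sum r_i$ and let $S\subseteq[n]$ have indicator vector $(0^{r_1},1^{r_2},\dots,0^{r_{2m-1}},1^{r_{2m}})$ ($x^p$ = $p$ consecutive copies of $x$); $i(r,t):=i(\mathrm{SM}_n(S),t)$. For integers $a,b\ge0$ with $a+b\ge1$, $c\in\mathbb Z$, $t\ge0$: $F(a,b,c,t)=\sum_{j=0}^{a+b}(-1)^j\binom{a+b}{j}\binom{(t+1)(b-j)+a+c-1}{a+b-1}$, with $\binom00=1$ and $\binom NK=0$ if $K<0$ or $N<K$. *)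

theory Defs
  imports Complex_Main
begin

definition gale_le :: "nat set \<Rightarrow> nat set \<Rightarrow> bool" where
  "gale_le T S \<longleftrightarrow> card T = card S \<and>
     (\<forall>i < card S. sorted_list_of_set T ! i \<le> sorted_list_of_set S ! i)"

definition schubert_bases :: "nat \<Rightarrow> nat set \<Rightarrow> nat set set" where
  "schubert_bases n S = {T. T \<subseteq> {1..n} \<and> gale_le T S}"

(* number of lattice points in the t-th dilate of the matroid polytope
   conv{ e_B : B basis }, points of R^n represented as functions nat \<Rightarrow> _;
   the convex hull of the finite set of indicator vectors is written out as the
   set of convex combinations *)
definition polytope_lattice_count :: "nat set set \<Rightarrow> nat \<Rightarrow> nat" where
  "polytope_lattice_count Bs t = card {x :: nat \<Rightarrow> int. \<exists>w :: nat set \<Rightarrow> real.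
      (\<forall>B\<in>Bs. 0 \<le> w B) \<and> (\<Sum>B\<in>Bs. w B) = 1 \<and>
      (\<forall>i. real_of_int (x i) = real t * (\<Sum>B\<in>Bs. w B * (if i \<in> B then 1 else 0)))}"

(* indicator word (0^{r1},1^{r2},...,0^{r_{2m-1}},1^{r_{2m}}), True = 1 *)
fun ind_word :: "nat list \<Rightarrow> bool list" where
  "ind_word [] = []"
| "ind_word [x] = replicate x False"
| "ind_word (x # y # rs) = replicate x False @ replicate y True @ ind_word rs"

definition seq_set :: "nat list \<Rightarrow> nat set" where
  "seq_set r = {i \<in> {1..length (ind_word r)}. ind_word r ! (i - 1)}"

definition iseq :: "nat list \<Rightarrow> nat \<Rightarrow> nat" where
  "iseq r t = polytope_lattice_count (schubert_bases (sum_list r) (seq_set r)) t"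

definition binom :: "int \<Rightarrow> int \<Rightarrow> int" where
  "binom N K = (if K < 0 \<or> N < K then 0 else int (nat N choose nat K))"

definition F :: "nat \<Rightarrow> nat \<Rightarrow> int \<Rightarrow> nat \<Rightarrow> int" where
  "F a b c t = (\<Sum>j=0..a+b. (-1)^j * int ((a+b) choose j) *
      binom ((int t + 1) * (int b - int j) + int a + c - 1) (int a + int b - 1))"

end

theory Submission
  imports Defs
begin

definition BL :: "int \<Rightarrow> nat \<Rightarrow> int list set" where
  "BL T m = {xs. length xs = m \<and> (\<forall>v\<in>set xs. 0 \<le> v \<and> v \<le> T)}"

lemma BL_alt: "BL T m = {xs. set xs \<subseteq> {0..T} \<and> length xs = m}"
  unfolding BL_def by auto

lemma finite_BL: "finite (BL T m)"
  unfolding BL_alt by (rule finite_lists_length_eq) simp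

lemma card_cons_split:
  "card {xs \<in> BL T (Suc m). R xs} = (\<Sum>v\<in>{0..T}. card {ys \<in> BL T m. R (v#ys)})"
proof -
  have eq: "{xs \<in> BL T (Suc m). R xs} = (\<Union>v\<in>{0..T}. (Cons v) ` {ys\<in>BL T m. R (v#ys)})"
  proof (intro equalityI subsetI)
    fix xs assume "xs \<in> {xs \<in> BL T (Suc m). R xs}"
    then obtain v ys where "xs = v # ys" "ys \<in> BL T m" "R (v#ys)" "v \<in> {0..T}"
      unfolding BL_def by (cases xs) auto
    then show "xs \<in> (\<Union>v\<in>{0..T}. (Cons v) ` {ys\<in>BL T m. R (v#ys)})" by auto
  qed (auto simp: BL_def)
  have fin: "\<And>P. finite {ys\<in>BL T m. P ys}" using finite_BL by simp
  show ?thesis unfolding eq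
    by (subst card_UN_disjoint) (auto intro!: fin sum.cong simp: card_image)
qed

lemma card_BL0: "card {xs \<in> BL T 0. R xs} = (if R [] then 1 else 0)"
proof -
  have "{xs \<in> BL T 0. R xs} = (if R [] then {[]} else {})" by (auto simp: BL_def)
  then show ?thesis by simp
qed


lemma binom_pascal:
  assumes "0 \<le> K"
  shows "binom (M+1) (K+1) = binom M (K+1) + binom M K"
proof (cases "M < K")
  case True then show ?thesis using assms by (simp add: binom_def)
next
  case False
  show ?thesis
  proof (cases "M = K")
    case True then show ?thesis using assms by (simp add: binom_def)
  next
    case False
    with \<open>\<not> M < K\<close> have "K < M" by simp
    have "nat (M+1) = Suc (nat M)" "nat (K+1) = Suc (nat K)" using assms \<open>K < M\<close> by auto
    then show ?thesis using assms \<open>K < M\<close> by (simp add: binom_def)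
  qed
qed

lemma hockey:
  assumes "0 \<le> K"
  shows "(\<Sum>v\<in>{0..N}. binom (M - int v) K) = binom (M+1) (K+1) - binom (M - int N) (K+1)"
proof (induction N)
  case 0
  then show ?case using binom_pascal[OF assms, of M] by simp
next
  case (Suc N)
  have "binom (M - int N) (K+1) = binom (M - int N - 1) (K+1) + binom (M - int N - 1) K"
    using binom_pascal[OF assms, of "M - int N - 1"] by simp
  then show ?case using Suc by (simp add: algebra_simps)
qed

definition Gf :: "int \<Rightarrow> nat \<Rightarrow> int \<Rightarrow> int" where
  "Gf T m s = (\<Sum>j\<le>m. (-1)^j * int (m choose j) * binom (s - int j * (T+1) + int m - 1) (int m - 1))"

lemma Gf_step:
  assumes "1 \<le> m"
  shows "(\<Sum>v\<in>{0..t}. Gf (int t) m (s - int v)) = Gf (int t) (Suc m) s"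
proof -
  define H where "H j = binom (s - int j * (int t+1) + int m) (int m)" for j
  have inner: "(\<Sum>v\<in>{0..t}. binom (s - int v - int j * (int t+1) + int m - 1) (int m - 1))
      = H j - H (Suc j)" for j
  proof -
    have "(\<Sum>v\<in>{0..t}. binom (s - int v - int j * (int t+1) + int m - 1) (int m - 1))
       = (\<Sum>v\<in>{0..t}. binom ((s - int j * (int t+1) + int m - 1) - int v) (int m - 1))"
      by (simp add: algebra_simps)
    also have "\<dots> = binom (s - int j * (int t+1) + int m - 1 + 1) (int m - 1 + 1)
                  - binom (s - int j * (int t+1) + int m - 1 - int t) (int m - 1 + 1)"
      using assms by (intro hockey) simp
    also have "\<dots> = H j - H (Suc j)" unfolding H_def by (simp add: algebra_simps)
    finally show ?thesis .
  qed
  have "(\<Sum>v\<in>{0..t}. Gf (int t) m (s - int v))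
      = (\<Sum>j\<le>m. (-1)^j * int (m choose j) *
            (\<Sum>v\<in>{0..t}. binom (s - int v - int j * (int t+1) + int m - 1) (int m - 1)))"
    unfolding Gf_def by (subst sum.swap) (simp add: sum_distrib_left)
  also have "\<dots> = (\<Sum>j\<le>m. (-1)^j * int (m choose j) * (H j - H (Suc j)))"
    by (simp add: inner)
  also have "\<dots> = (\<Sum>j\<le>m. (-1)^j * int (m choose j) * H j)
                 - (\<Sum>j\<le>m. (-1)^j * int (m choose j) * H (Suc j))"
    by (simp add: algebra_simps sum_subtractf)
  also have "(\<Sum>j\<le>m. (-1)^j * int (m choose j) * H j)
      = (\<Sum>j\<le>Suc m. (-1)^j * int (m choose j) * H j)" by simp
  also have "\<dots> = H 0 + (\<Sum>j\<le>m. (-1)^(Suc j) * int (m choose Suc j) * H (Suc j))"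
    by (subst sum.atMost_Suc_shift) simp
  also have "H 0 + (\<Sum>j\<le>m. (-1)^(Suc j) * int (m choose Suc j) * H (Suc j))
      - (\<Sum>j\<le>m. (-1)^j * int (m choose j) * H (Suc j))
      = H 0 + (\<Sum>j\<le>m. (-1)^(Suc j) * int (Suc m choose Suc j) * H (Suc j))"
  proof -
    have "(\<Sum>j\<le>m. (-1)^(Suc j) * int (m choose Suc j) * H (Suc j))
      - (\<Sum>j\<le>m. (-1)^j * int (m choose j) * H (Suc j))
      = (\<Sum>j\<le>m. (-1)^(Suc j) * int (Suc m choose Suc j) * H (Suc j))"
      by (simp only: sum_subtractf[symmetric]) (intro sum.cong, simp_all add: algebra_simps)
    then show ?thesis by simp
  qed
  also have "\<dots> = (\<Sum>j\<le>Suc m. (-1)^j * int (Suc m choose j) * H j)"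
    by (subst sum.atMost_Suc_shift) simp
  also have "\<dots> = Gf (int t) (Suc m) s"
    unfolding Gf_def H_def by (intro sum.cong) (simp_all add: algebra_simps)
  finally show ?thesis .
qed

lemma Gf_one: "Gf (int t) 1 s = (if 0 \<le> s \<and> s \<le> int t then 1 else 0)"
  unfolding Gf_def by (simp add: binom_def)



definition Lc :: "nat \<Rightarrow> nat \<Rightarrow> int \<Rightarrow> nat" where
  "Lc t m s = card {xs \<in> BL (int t) m. sum_list xs = s}"

lemma sum_int_shift: "(\<Sum>v\<in>{0..int t}. f v) = (\<Sum>v\<in>{0..t}. f (int v))"
  using sum.atLeast_int_atMost_int_shift[of f 0 t] by (simp add: comp_def)

lemma Lc_Suc: "Lc t (Suc m) s = (\<Sum>v\<in>{0..t}. Lc t m (s - int v))"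
proof -
  have "Lc t (Suc m) s = (\<Sum>v\<in>{0..int t}. card {ys \<in> BL (int t) m. sum_list (v#ys) = s})"
    unfolding Lc_def by (rule card_cons_split)
  also have "\<dots> = (\<Sum>v\<in>{0..int t}. Lc t m (s - v))"
    unfolding Lc_def by (intro sum.cong refl arg_cong[where f=card]) auto
  finally show ?thesis by (simp add: sum_int_shift)
qed

lemma Lc_Gf: "1 \<le> m \<Longrightarrow> int (Lc t m s) = Gf (int t) m s"
proof (induction m arbitrary: s rule: nat_induct_at_least)
  case base
  have "Lc t 1 s = (\<Sum>v\<in>{0..t}. Lc t 0 (s - int v))" using Lc_Suc[of t 0 s] by simp
  also have "\<dots> = (\<Sum>v\<in>{0..t}. if int v = s then 1 else 0)"
    unfolding Lc_def card_BL0 by (intro sum.cong) auto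
  also have "\<dots> = (if 0 \<le> s \<and> s \<le> int t then 1 else 0)"
  proof (cases "0 \<le> s \<and> s \<le> int t")
    case True
    then have "{0..t} \<inter> {v. int v = s} = {nat s}" by auto
    then show ?thesis using True by (simp add: sum.If_cases)
  next
    case False
    then have "{0..t} \<inter> {v. int v = s} = {}" by auto
    then show ?thesis using False by (simp add: sum.If_cases)
  qed
  finally show ?case using Gf_one[of t s] by simp
next
  case (Suc m)
  have "int (Lc t (Suc m) s) = (\<Sum>v\<in>{0..t}. int (Lc t m (s - int v)))"
    by (simp add: Lc_Suc)
  also have "\<dots> = (\<Sum>v\<in>{0..t}. Gf (int t) m (s - int v))" using Suc by simp
  also have "\<dots> = Gf (int t) (Suc m) s" using Suc(1) by (rule Gf_step)
  finally show ?case .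
qed

lemma F_Gf: "F (a+1) b 0 t = Gf (int t) (a+b+1) (int t * int b)"
  unfolding F_def Gf_def
  by (intro sum.cong) (auto simp: atLeast0AtMost algebra_simps)



lemma inner1:
  fixes f :: "nat \<Rightarrow> int"
  assumes "p \<le> t"
  shows "(\<Sum>q\<in>{0..t}. if t \<le> p+q then f (p+q-t) else 0) = (\<Sum>s\<in>{0..p}. f s)"
proof -
  have "(\<Sum>q\<in>{0..t}. if t \<le> p+q then f (p+q-t) else 0) = (\<Sum>q\<in>{t-p..t}. f (p+q-t))"
    by (rule sum.mono_neutral_cong_right) (use assms in auto)
  also have "\<dots> = (\<Sum>s\<in>{0..p}. f s)"
    by (rule sum.reindex_bij_witness[where i="\<lambda>s. s + (t-p)" and j="\<lambda>q. q - (t-p)"])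
       (use assms in \<open>auto simp: add.commute\<close>)
  finally show ?thesis .
qed

lemma inner2:
  fixes f :: "nat \<Rightarrow> int"
  assumes "p \<le> t"
  shows "(\<Sum>q\<in>{0..t}. if t \<le> p+q then f (2*t-p-q) else 0) = (\<Sum>s\<in>{t-p..t}. f s)"
proof -
  have "(\<Sum>q\<in>{0..t}. if t \<le> p+q then f (2*t-p-q) else 0) = (\<Sum>q\<in>{t-p..t}. f (2*t-p-q))"
    by (rule sum.mono_neutral_cong_right) (use assms in auto)
  also have "\<dots> = (\<Sum>s\<in>{t-p..t}. f s)"
    by (rule sum.reindex_bij_witness[where i="\<lambda>s. 2*t-p-s" and j="\<lambda>q. 2*t-p-q"])
       (use assms in auto)
  finally show ?thesis .
qed

lemma split_at:
  fixes f :: "nat \<Rightarrow> int"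
  assumes "p \<le> t"
  shows "(\<Sum>s\<in>{0..p}. f s) + (\<Sum>s\<in>{p..t}. f s) = (\<Sum>s\<in>{0..t}. f s) + f p"
proof -
  have "(\<Sum>s\<in>{0..t}. f s) = (\<Sum>s\<in>{0..p}. f s) + (\<Sum>s\<in>{p+1..t}. f s)"
    using sum.ub_add_nat[of 0 p f "t-p"] assms by simp
  moreover have "(\<Sum>s\<in>{p..t}. f s) = f p + (\<Sum>s\<in>{p+1..t}. f s)"
    using assms by (simp add: sum.atLeast_Suc_atMost)
  ultimately show ?thesis by simp
qed

lemma main_identity:
  fixes f :: "nat \<Rightarrow> int"
  shows "(\<Sum>p\<in>{0..t}. \<Sum>q\<in>{0..t}. if t \<le> p+q then f (p+q-t) + f (2*t-p-q) else 0)
       = (int t + 2) * (\<Sum>s\<in>{0..t}. f s)"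
proof -
  have "(\<Sum>p\<in>{0..t}. \<Sum>q\<in>{0..t}. if t \<le> p+q then f (p+q-t) + f (2*t-p-q) else 0)
      = (\<Sum>p\<in>{0..t}. (\<Sum>q\<in>{0..t}. if t \<le> p+q then f (p+q-t) else 0)
                      + (\<Sum>q\<in>{0..t}. if t \<le> p+q then f (2*t-p-q) else 0))"
    by (simp add: sum.distrib[symmetric] if_distrib cong: if_cong)
  also have "\<dots> = (\<Sum>p\<in>{0..t}. (\<Sum>s\<in>{0..p}. f s)) + (\<Sum>p\<in>{0..t}. \<Sum>s\<in>{t-p..t}. f s)"
    by (simp add: inner1 inner2 sum.distrib)
  also have "(\<Sum>p\<in>{0..t}. \<Sum>s\<in>{t-p..t}. f s) = (\<Sum>p\<in>{0..t}. \<Sum>s\<in>{p..t}. f s)"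
    by (subst sum.atLeastAtMost_rev) simp
  also have "(\<Sum>p\<in>{0..t}. (\<Sum>s\<in>{0..p}. f s)) + (\<Sum>p\<in>{0..t}. \<Sum>s\<in>{p..t}. f s)
      = (\<Sum>p\<in>{0..t}. (\<Sum>s\<in>{0..t}. f s) + f p)"
    by (simp add: sum.distrib[symmetric] split_at)
  also have "\<dots> = (int t + 2) * (\<Sum>s\<in>{0..t}. f s)"
    by (simp add: sum.distrib algebra_simps)
  finally show ?thesis .
qed



definition Lq :: "nat \<Rightarrow> nat \<Rightarrow> nat \<Rightarrow> int list set" where
  "Lq t n k = {xs \<in> BL (int t) n. sum_list xs = int t * int k \<and> int t \<le> xs!0 + xs!1}"

lemma card_Lq:
  "card (Lq t (Suc (Suc m)) k) =
    (\<Sum>p\<in>{0..t}. \<Sum>q\<in>{0..t}. if t \<le> p+q then Lc t m (int t * int k - int p - int q) else 0)"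
proof -
  have "card (Lq t (Suc (Suc m)) k) = (\<Sum>v\<in>{0..int t}. \<Sum>u\<in>{0..int t}.
      card {zs \<in> BL (int t) m. sum_list (v#u#zs) = int t * int k \<and> int t \<le> (v#u#zs)!0 + (v#u#zs)!1})"
    unfolding Lq_def by (simp only: card_cons_split)
  also have "\<dots> = (\<Sum>v\<in>{0..int t}. \<Sum>u\<in>{0..int t}.
      if int t \<le> v + u then Lc t m (int t * int k - v - u) else 0)"
    unfolding Lc_def
    by (intro sum.cong refl) (auto intro!: arg_cong[where f=card])
  also have "\<dots> = (\<Sum>p\<in>{0..t}. \<Sum>q\<in>{0..t}. if t \<le> p+q then Lc t m (int t * int k - int p - int q) else 0)"
    by (simp only: sum_int_shift of_nat_add[symmetric] of_nat_le_iff)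
  finally show ?thesis .
qed

lemma sum_list_refl: "sum_list (map (\<lambda>v. T - v) xs) = int (length xs) * T - sum_list xs"
  by (induction xs) (auto simp: algebra_simps)

lemma Lc_sym: "Lc t m s = Lc t m (int t * int m - s)"
proof -
  let ?f = "map (\<lambda>v. int t - v)"
  have inj: "inj_on ?f A" for A
  proof -
    have i: "inj (\<lambda>v::int. int t - v)" by (auto simp: inj_def)
    show ?thesis by (rule inj_onI) (simp only: inj_map_eq_map[OF i])
  qed
  have "?f ` {xs \<in> BL (int t) m. sum_list xs = s} = {xs \<in> BL (int t) m. sum_list xs = int t * int m - s}"
  proof (intro equalityI subsetI)
    fix ys assume "ys \<in> ?f ` {xs \<in> BL (int t) m. sum_list xs = s}"
    then show "ys \<in> {xs \<in> BL (int t) m. sum_list xs = int t * int m - s}"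
      by (auto simp: BL_def sum_list_refl algebra_simps)
  next
    fix ys assume ys: "ys \<in> {xs \<in> BL (int t) m. sum_list xs = int t * int m - s}"
    have "ys = ?f (?f ys)" by (simp add: comp_def)
    moreover have "?f ys \<in> {xs \<in> BL (int t) m. sum_list xs = s}"
      using ys by (auto simp: BL_def sum_list_refl algebra_simps)
    ultimately show "ys \<in> ?f ` {xs \<in> BL (int t) m. sum_list xs = s}" by blast
  qed
  moreover have "card (?f ` {xs \<in> BL (int t) m. sum_list xs = s}) = card {xs \<in> BL (int t) m. sum_list xs = s}"
    by (rule card_image[OF inj])
  ultimately show ?thesis unfolding Lc_def by simp
qed



lemma seq_set_1 : "seq_set [1,1,c,d] = insert 2 {c+3..c+d+2}"
proof -
  have w: "ind_word [1,1,c,d] = [False, True] @ replicate c False @ replicate d True"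
    by simp
  show ?thesis
  proof (intro equalityI subsetI)
    fix i assume "i \<in> seq_set [1,1,c,d]"
    then have i: "1 \<le> i" "i \<le> c+d+2" "([False, True] @ replicate c False @ replicate d True) ! (i-1)"
      unfolding seq_set_def w by auto
    show "i \<in> insert 2 {c+3..c+d+2}"
    proof (rule ccontr)
      assume "i \<notin> insert 2 {c+3..c+d+2}"
      then have "i = 1 \<or> (3 \<le> i \<and> i \<le> c+2)" using i by auto
      then show False using i(3) by (auto simp: nth_append split: if_splits)
    qed
  next
    fix i assume "i \<in> insert 2 {c+3..c+d+2}"
    then show "i \<in> seq_set [1,1,c,d]"
      unfolding seq_set_def w by (auto simp: nth_append)
  qed
qed

lemma sorted_S: "sorted_list_of_set (insert (2::nat) {c+3..c+d+2}) = 2 # [c+3..<c+d+3]"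
proof -
  have "sorted_list_of_set (insert (2::nat) {c+3..c+d+2}) = insort 2 (sorted_list_of_set ({c+3..c+d+2} - {2}))"
    by (rule sorted_list_of_set_insert_remove) simp
  also have "{c+3..c+d+2} - {2} = {c+3..<c+d+3}" by auto
  also have "sorted_list_of_set {c+3..<c+d+3} = [c+3..<c+d+3]" by simp
  also have "insort 2 [c+3..<c+d+3] = 2 # [c+3..<c+d+3]"
    by (rule insort_is_Cons) auto
  finally show ?thesis .
qed

lemma card_S: "card (insert (2::nat) {c+3..c+d+2}) = d+1"
  by simp

lemma strict_chain:
  fixes xs :: "nat list"
  assumes "sorted_wrt (<) xs" "i \<le> j" "j < length xs"
  shows "xs!i + (j - i) \<le> xs!j"
  using assms(2,3)
proof (induction j)
  case 0 then show ?case by simp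
next
  case (Suc j)
  show ?case
  proof (cases "i = Suc j")
    case True then show ?thesis by simp
  next
    case False
    then have "i \<le> j" using Suc by simp
    then have "xs!i + (j - i) \<le> xs!j" using Suc by simp
    moreover have "xs!j < xs!(Suc j)" using sorted_wrt_nth_less[OF assms(1), of j "Suc j"] Suc by simp
    ultimately show ?thesis using \<open>i \<le> j\<close> by simp
  qed
qed

lemma bases_char:
  "schubert_bases (sum_list [1,1,c,d]) (seq_set [1,1,c,d])
     = {T. T \<subseteq> {1..c+d+2} \<and> card T = d+1 \<and> (1 \<in> T \<or> 2 \<in> T)}"
proof (intro equalityI subsetI)
  fix T assume "T \<in> schubert_bases (sum_list [1,1,c,d]) (seq_set [1,1,c,d])"
  then have T: "T \<subseteq> {1..c+d+2}" "card T = d+1"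
      "\<forall>i<d+1. sorted_list_of_set T ! i \<le> (2 # [c+3..<c+d+3]) ! i"
    unfolding schubert_bases_def gale_le_def seq_set_1 sorted_S card_S by auto
  then have fin: "finite T" and ne: "T \<noteq> {}" using card_ge_0_finite by fastforce+
  have "Min T \<le> 2" using T(3)[rule_format, of 0] sorted_list_of_set_nonempty[OF fin ne] by simp
  moreover have "Min T \<in> T" using fin ne by simp
  moreover have "1 \<le> Min T" using T(1) \<open>Min T \<in> T\<close> by auto
  ultimately have "1 \<in> T \<or> 2 \<in> T"
    by (metis le_antisym le_Suc_eq numeral_2_eq_2 One_nat_def)
  then show "T \<in> {T. T \<subseteq> {1..c+d+2} \<and> card T = d+1 \<and> (1 \<in> T \<or> 2 \<in> T)}"
    using T by auto
next
  fix T assume "T \<in> {T. T \<subseteq> {1..c+d+2} \<and> card T = d+1 \<and> (1 \<in> T \<or> 2 \<in> T)}"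
  then have T: "T \<subseteq> {1..c+d+2}" "card T = d+1" "1 \<in> T \<or> 2 \<in> T" by auto
  have fin: "finite T" using T(1) finite_subset by blast
  have ne: "T \<noteq> {}" using T(3) by auto
  define xs where "xs = sorted_list_of_set T"
  have sx: "sorted_wrt (<) xs" and lx: "length xs = d+1" and setx: "set xs = T"
    unfolding xs_def using T(2) fin by auto
  have "xs ! i \<le> (2 # [c+3..<c+d+3]) ! i" if "i < d+1" for i
  proof (cases i)
    case 0
    have "xs ! 0 = Min T" unfolding xs_def using sorted_list_of_set_nonempty[OF fin ne] by simp
    moreover have "Min T \<le> 2" using T(3) fin by (auto intro: Min_le order.trans)
    ultimately show ?thesis using 0 by simp
  next
    case (Suc i')
    have "xs ! i + (d - i) \<le> xs ! d" using strict_chain[OF sx, of i d] that lx by simp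
    moreover have "xs ! d \<in> T" using setx lx nth_mem[of d xs] by auto
    then have "xs ! d \<le> c+d+2" using T(1) by auto
    ultimately have "xs ! i \<le> c + 3 + i'" using Suc that by simp
    then show ?thesis using Suc that by simp
  qed
  then show "T \<in> schubert_bases (sum_list [1,1,c,d]) (seq_set [1,1,c,d])"
    unfolding schubert_bases_def gale_le_def seq_set_1 sorted_S card_S using T xs_def
    by (auto simp: add.commute add.left_commute)
qed



definition Bset :: "nat \<Rightarrow> nat \<Rightarrow> nat set set" where
  "Bset n k = {T. T \<subseteq> {1..n} \<and> card T = k \<and> (1 \<in> T \<or> 2 \<in> T)}"

definition Qset :: "nat \<Rightarrow> nat \<Rightarrow> nat \<Rightarrow> (nat \<Rightarrow> int) set" where
  "Qset n k t = {x. (\<forall>i. i \<notin> {1..n} \<longrightarrow> x i = 0) \<and> (\<forall>i. 0 \<le> x i \<and> x i \<le> int t)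
      \<and> (\<Sum>i\<in>{1..n}. x i) = int t * int k \<and> int t \<le> x 1 + x 2}"

lemma finite_Bset: "finite (Bset n k)"
  by (rule finite_subset[of _ "Pow {1..n}"]) (auto simp: Bset_def)

lemma sum_ind_card:
  assumes "B \<subseteq> A" "finite A"
  shows "(\<Sum>i\<in>A. (if i \<in> B then 1 else 0) :: real) = real (card B)"
proof -
  have "A \<inter> {i. i \<in> B} = B" using assms by auto
  then show ?thesis using assms by (simp add: sum.If_cases)
qed

lemma fiber_sum:
  fixes g :: "'b \<Rightarrow> real"
  assumes "finite R" "finite Bs" "f ` R \<subseteq> Bs"
  shows "(\<Sum>B\<in>Bs. real (card {r\<in>R. f r = B}) * g B) = (\<Sum>r\<in>R. g (f r))"
proof -
  have "(\<Sum>r\<in>R. g (f r)) = (\<Sum>B\<in>Bs. \<Sum>r\<in>{r. r \<in> R \<and> f r = B}. g (f r))"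
    using sum.group[OF assms, of "\<lambda>r. g (f r)"] by simp
  also have "\<dots> = (\<Sum>B\<in>Bs. real (card {r\<in>R. f r = B}) * g B)"
    by (intro sum.cong refl) simp
  finally show ?thesis by simp
qed

lemma lattice_sub:
  assumes "x \<in> {x :: nat \<Rightarrow> int. \<exists>w :: nat set \<Rightarrow> real.
      (\<forall>B\<in>Bset n k. 0 \<le> w B) \<and> (\<Sum>B\<in>Bset n k. w B) = 1 \<and>
      (\<forall>i. real_of_int (x i) = real t * (\<Sum>B\<in>Bset n k. w B * (if i \<in> B then 1 else 0)))}"
  shows "x \<in> Qset n k t"
proof -
  let ?Bs = "Bset n k"
  from assms obtain w where w0: "\<forall>B\<in>?Bs. 0 \<le> w B" and w1: "(\<Sum>B\<in>?Bs. w B) = 1"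
    and wx: "\<And>i. real_of_int (x i) = real t * (\<Sum>B\<in>?Bs. w B * (if i \<in> B then 1 else 0))"
    by blast
  have fin: "finite ?Bs" by (rule finite_Bset)
  have out: "x i = 0" if "i \<notin> {1..n}" for i
  proof -
    have "(\<Sum>B\<in>?Bs. w B * (if i \<in> B then 1 else 0)) = 0"
      using that by (intro sum.neutral) (auto simp: Bset_def)
    then show ?thesis using wx[of i] by simp
  qed
  have bnd: "0 \<le> x i \<and> x i \<le> int t" for i
  proof -
    have "0 \<le> (\<Sum>B\<in>?Bs. w B * (if i \<in> B then 1 else 0))"
      using w0 by (intro sum_nonneg) auto
    moreover have "(\<Sum>B\<in>?Bs. w B * (if i \<in> B then 1 else 0)) \<le> (\<Sum>B\<in>?Bs. w B)"
      using w0 by (intro sum_mono) auto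
    ultimately have "0 \<le> real_of_int (x i)" "real_of_int (x i) \<le> real t"
      using wx[of i] w1 by (auto intro: mult_nonneg_nonneg mult_left_le)
    then show ?thesis by linarith
  qed
  have sw: "(\<Sum>i\<in>{1..n}. \<Sum>B\<in>?Bs. w B * (if i \<in> B then 1 else 0))
      = (\<Sum>B\<in>?Bs. w B * (\<Sum>i\<in>{1..n}. (if i \<in> B then 1 else 0)))"
    by (simp only: sum_distrib_left) (rule sum.swap)
  have "(\<Sum>i\<in>{1..n}. real_of_int (x i))
      = real t * (\<Sum>i\<in>{1..n}. \<Sum>B\<in>?Bs. w B * (if i \<in> B then 1 else 0))"
    by (simp only: wx sum_distrib_left)
  also have "\<dots> = real t * (\<Sum>B\<in>?Bs. w B * (\<Sum>i\<in>{1..n}. (if i \<in> B then 1 else 0)))"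
    by (simp only: sw)
  also have "\<dots> = real t * (\<Sum>B\<in>?Bs. w B * real k)"
    by (intro arg_cong[where f="\<lambda>z. real t * z"] sum.cong refl)
       (auto simp: Bset_def sum_ind_card)
  also have "\<dots> = real t * real k" using w1 by (simp add: sum_distrib_right[symmetric])
  finally have s: "(\<Sum>i\<in>{1..n}. x i) = int t * int k"
    by (metis of_int_eq_iff of_int_mult of_int_of_nat_eq of_int_sum)
  have "real t * (\<Sum>B\<in>?Bs. w B) \<le> real t * (\<Sum>B\<in>?Bs. w B * ((if 1 \<in> B then 1 else 0) + (if 2 \<in> B then 1 else 0)))"
    using w0 by (intro mult_left_mono sum_mono) (auto simp: Bset_def)
  also have "\<dots> = real_of_int (x 1) + real_of_int (x 2)"
    by (simp add: wx distrib_left sum.distrib)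
  finally have "real_of_int (int t) \<le> real_of_int (x 1 + x 2)" using w1 by simp
  then have "int t \<le> x 1 + x 2" by (simp only: of_int_le_iff)
  then show ?thesis unfolding Qset_def using out bnd s by blast
qed



lemma hermite:
  assumes "0 < t"
  shows "(\<Sum>r<t. (int y + int r) div int t) = int y"
proof (induction y)
  case 0
  have "(\<Sum>r<t. (int 0 + int r) div int t) = (\<Sum>r<t. 0)"
    by (intro sum.cong refl) simp
  then show ?case by simp
next
  case (Suc y)
  define g where "g r = (int y + int r) div int t" for r
  have a: "(\<Sum>r<Suc t. g r) = g 0 + (\<Sum>r<t. g (Suc r))" by (rule sum.lessThan_Suc_shift)
  have b: "(\<Sum>r<Suc t. g r) = (\<Sum>r<t. g r) + g t" by simp
  have "g t = g 0 + 1" unfolding g_def using assms by (simp add: div_add_self2)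
  then have "(\<Sum>r<t. g (Suc r)) = (\<Sum>r<t. g r) + 1" using a b by simp
  moreover have "(\<Sum>r<t. g (Suc r)) = (\<Sum>r<t. (int (Suc y) + int r) div int t)"
    unfolding g_def by (intro sum.cong refl) (simp add: algebra_simps)
  ultimately show ?case using Suc unfolding g_def by simp
qed

lemma div_step01:
  fixes A d T :: int
  assumes "0 \<le> d" "d \<le> T" "0 < T"
  shows "(A + d) div T - A div T = 0 \<or> (A + d) div T - A div T = 1"
proof -
  have "A div T \<le> (A + d) div T" using assms by (intro zdiv_mono1) auto
  moreover have "(A + d) div T \<le> (A + T) div T" using assms by (intro zdiv_mono1) auto
  moreover have "(A + T) div T = A div T + 1" using assms by simp
  ultimately show ?thesis by linarith
qed

lemma lattice_sup:
  assumes t1: "1 \<le> t" and n2: "2 \<le> n" and xQ: "x \<in> Qset n k t"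
  shows "\<exists>w :: nat set \<Rightarrow> real.
      (\<forall>B\<in>Bset n k. 0 \<le> w B) \<and> (\<Sum>B\<in>Bset n k. w B) = 1 \<and>
      (\<forall>i. real_of_int (x i) = real t * (\<Sum>B\<in>Bset n k. w B * (if i \<in> B then 1 else 0)))"
proof -
  let ?T = "int t"
  have Tpos: "0 < ?T" using t1 by simp
  from xQ have xout: "\<And>i. i \<notin> {1..n} \<Longrightarrow> x i = 0"
    and xb: "\<And>i. 0 \<le> x i \<and> x i \<le> ?T"
    and xs: "(\<Sum>i\<in>{1..n}. x i) = ?T * int k" and x12: "?T \<le> x 1 + x 2"
    unfolding Qset_def by blast+
  define X where "X j = (\<Sum>i\<in>{1..j}. x i)" for j
  have X0: "X 0 = 0" unfolding X_def by simp
  have XS: "X i = X (i - 1) + x i" if i1: "1 \<le> i" for i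
  proof -
    obtain j where "i = Suc j" using i1 by (cases i) auto
    then show ?thesis unfolding X_def by simp
  qed
  have Xn: "X n = ?T * int k" unfolding X_def using xs by simp
  have X2: "X 2 = x 1 + x 2" unfolding X_def by (simp add: numeral_2_eq_2)
  define g where "g r j = (X j + int r) div ?T" for r j
  define D where "D r i = g r i - g r (i - 1)" for r i
  have D01: "D r i = 0 \<or> D r i = 1" if "1 \<le> i" for r i
    unfolding D_def g_def XS[OF that]
    using div_step01[of "x i" ?T "X (i-1) + int r"] xb[of i] Tpos by (simp add: algebra_simps)
  define Bb where "Bb r = {i\<in>{1..n}. D r i = 1}" for r
  have sumD: "(\<Sum>i\<in>{1..n}. D r i) = g r n - g r 0" for r
    unfolding D_def using sum_telescope''[of 0 n "g r"] by simp
  have cardBb: "card (Bb r) = k" if "r < t" for r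
  proof -
    have "int (card (Bb r)) = (\<Sum>i\<in>{1..n}. if D r i = 1 then 1 else 0)"
      unfolding Bb_def by (simp add: sum.If_cases Int_def)
    also have "\<dots> = (\<Sum>i\<in>{1..n}. D r i)"
      using D01 by (intro sum.cong refl) force
    also have "\<dots> = g r n - g r 0" by (rule sumD)
    also have "\<dots> = int k" unfolding g_def Xn X0 using that Tpos
      by (simp add: div_pos_pos_trivial add.commute)
    finally show ?thesis by simp
  qed
  have hit: "1 \<in> Bb r \<or> 2 \<in> Bb r" if "r < t" for r
  proof -
    have "D r 1 + D r 2 = g r 2 - g r 0" unfolding D_def by (simp add: numeral_2_eq_2)
    moreover have "g r 0 = 0" unfolding g_def X0 using that by (simp add: div_pos_pos_trivial)
    moreover have "(?T + int r) div ?T \<le> g r 2" unfolding g_def X2 using x12 Tpos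
      by (intro zdiv_mono1) auto
    moreover have "(?T + int r) div ?T = 1" using that Tpos by (simp add: div_pos_pos_trivial)
    ultimately have "1 \<le> D r 1 + D r 2" by simp
    then have "D r 1 = 1 \<or> D r 2 = 1" using D01[of 1 r] D01[of 2 r] by auto
    then show ?thesis unfolding Bb_def using n2 by auto
  qed
  have BbB: "Bb r \<in> Bset n k" if "r < t" for r
    using cardBb[OF that] hit[OF that] unfolding Bset_def Bb_def by auto
  have cnt: "int (card {r\<in>{..<t}. i \<in> Bb r}) = x i" for i
  proof (cases "i \<in> {1..n}")
    case True
    then have i1: "1 \<le> i" by simp
    have "int (card {r\<in>{..<t}. i \<in> Bb r}) = (\<Sum>r<t. if D r i = 1 then 1 else 0)"
      unfolding Bb_def using True by (simp add: sum.If_cases Int_def)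
    also have "\<dots> = (\<Sum>r<t. D r i)"
      using D01[OF i1] by (intro sum.cong refl) force
    also have "\<dots> = (\<Sum>r<t. g r i) - (\<Sum>r<t. g r (i - 1))"
      unfolding D_def by (simp add: sum_subtractf)
    also have "(\<Sum>r<t. g r i) = X i"
    proof -
      have "X i \<ge> 0" unfolding X_def using xb by (intro sum_nonneg) auto
      then obtain y where "X i = int y" by (metis nonneg_eq_int)
      then show ?thesis unfolding g_def using hermite[of t y] t1 by simp
    qed
    also have "(\<Sum>r<t. g r (i - 1)) = X (i - 1)"
    proof -
      have "X (i - 1) \<ge> 0" unfolding X_def using xb by (intro sum_nonneg) auto
      then obtain y where "X (i - 1) = int y" by (metis nonneg_eq_int)
      then show ?thesis unfolding g_def using hermite[of t y] t1 by simp
    qed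
    finally show ?thesis using XS[OF i1] by simp
  next
    case False
    then have "{r\<in>{..<t}. i \<in> Bb r} = {}" unfolding Bb_def by auto
    then show ?thesis using xout[OF False] by simp
  qed
  define w where "w B = real (card {r\<in>{..<t}. Bb r = B}) / real t" for B
  have img: "Bb ` {..<t} \<subseteq> Bset n k" using BbB by auto
  have "(\<Sum>B\<in>Bset n k. w B) = (\<Sum>B\<in>Bset n k. real (card {r\<in>{..<t}. Bb r = B}) * (\<lambda>_. 1 / real t) B)"
    unfolding w_def by simp
  also have "\<dots> = (\<Sum>r<t. 1 / real t)"
    by (rule fiber_sum[OF _ finite_Bset img]) simp
  also have "\<dots> = 1" using t1 by simp
  finally have w1: "(\<Sum>B\<in>Bset n k. w B) = 1" .
  have wx: "real_of_int (x i) = real t * (\<Sum>B\<in>Bset n k. w B * (if i \<in> B then 1 else 0))" for i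
  proof -
    have "real t * (\<Sum>B\<in>Bset n k. w B * (if i \<in> B then 1 else 0))
        = (\<Sum>B\<in>Bset n k. real (card {r\<in>{..<t}. Bb r = B}) * (if i \<in> B then 1 else 0))"
      unfolding w_def using t1 by (simp add: sum_distrib_left)
    also have "\<dots> = (\<Sum>r<t. (if i \<in> Bb r then 1 else 0))"
      by (rule fiber_sum[OF _ finite_Bset img]) simp
    also have "\<dots> = real (card {r\<in>{..<t}. i \<in> Bb r})"
      by (simp add: sum.If_cases Int_def)
    also have "\<dots> = real_of_int (x i)" using cnt[of i]
      by (metis of_int_of_nat_eq)
    finally show ?thesis by simp
  qed
  show ?thesis
    by (rule exI[of _ w]) (use w1 wx in \<open>auto simp: w_def\<close>)
qed



lemma card_Qset:
  assumes n2: "2 \<le> n"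
  shows "card (Qset n k t) = card (Lq t n k)"
proof -
  let ?phi = "\<lambda>x::nat\<Rightarrow>int. map x [1..<n+1]"
  let ?psi = "\<lambda>xs::int list. \<lambda>i. if 1 \<le> i \<and> i \<le> n then xs ! (i - 1) else 0"
  have sumconv: "(\<Sum>i\<in>{1..n}. f i) = sum_list (map f [1..<n+1])" for f :: "nat \<Rightarrow> int"
  proof -
    have "sum f (set [1..<n+1]) = sum_list (map f [1..<n+1])" by (rule sum_set_upt_conv_sum_list_nat)
    moreover have "set [1..<n+1] = {1..n}" by auto
    ultimately show ?thesis by metis
  qed
  have inj: "inj_on ?phi (Qset n k t)"
  proof (rule inj_onI)
    fix x y assume x: "x \<in> Qset n k t" and y: "y \<in> Qset n k t" and e: "?phi x = ?phi y"
    show "x = y"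
    proof
      fix i
      show "x i = y i"
      proof (cases "i \<in> {1..n}")
        case True
        then have "?phi x ! (i - 1) = x i" "?phi y ! (i - 1) = y i" by (auto simp del: upt_Suc)
        then show ?thesis using e by metis
      next
        case False
        then show ?thesis using x y unfolding Qset_def by auto
      qed
    qed
  qed
  have "?phi ` Qset n k t = Lq t n k"
  proof (intro equalityI subsetI)
    fix xs assume "xs \<in> ?phi ` Qset n k t"
    then obtain x where x: "x \<in> Qset n k t" and xs: "xs = ?phi x" by blast
    have "?phi x ! 0 = x 1" "?phi x ! 1 = x 2" using n2 by (auto simp del: upt_Suc simp: numeral_2_eq_2)
    moreover have "sum_list (?phi x) = (\<Sum>i\<in>{1..n}. x i)" by (rule sumconv[symmetric])
    ultimately show "xs \<in> Lq t n k" using x unfolding xs Lq_def BL_def Qset_def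
      by (auto simp del: upt_Suc)
  next
    fix xs assume xs: "xs \<in> Lq t n k"
    then have len: "length xs = n" and bd: "\<forall>v\<in>set xs. 0 \<le> v \<and> v \<le> int t"
      and sx: "sum_list xs = int t * int k" and x01: "int t \<le> xs!0 + xs!1"
      unfolding Lq_def BL_def by auto
    have bk: "?phi (?psi xs) = xs"
      by (rule nth_equalityI) (use len in \<open>auto simp del: upt_Suc\<close>)
    have "?psi xs \<in> Qset n k t"
      unfolding Qset_def
    proof (intro CollectI conjI allI impI)
      fix i show "0 \<le> ?psi xs i" "?psi xs i \<le> int t"
        using bd len by (auto simp: nth_mem)
    next
      show "(\<Sum>i\<in>{1..n}. ?psi xs i) = int t * int k"
        using sumconv[of "?psi xs"] bk sx by simp
    next
      show "int t \<le> ?psi xs 1 + ?psi xs 2" using x01 n2 by simp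
    qed auto
    then show "xs \<in> ?phi ` Qset n k t" by (rule image_eqI[where f="?phi", OF bk[symmetric]])
  qed
  then show ?thesis using card_image[OF inj] by simp
qed

lemma iseq_char:
  assumes "1 \<le> t"
  shows "iseq [1,1,c,d] t = card (Lq t (c+d+2) (d+1))"
proof -
  have bs: "schubert_bases (sum_list [1,1,c,d]) (seq_set [1,1,c,d]) = Bset (c+d+2) (d+1)"
    unfolding bases_char Bset_def by simp
  have "{x :: nat \<Rightarrow> int. \<exists>w :: nat set \<Rightarrow> real.
      (\<forall>B\<in>Bset (c+d+2) (d+1). 0 \<le> w B) \<and> (\<Sum>B\<in>Bset (c+d+2) (d+1). w B) = 1 \<and>
      (\<forall>i. real_of_int (x i) = real t * (\<Sum>B\<in>Bset (c+d+2) (d+1). w B * (if i \<in> B then 1 else 0)))}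
      = Qset (c+d+2) (d+1) t"
  proof (intro equalityI subsetI)
    fix x assume "x \<in> {x :: nat \<Rightarrow> int. \<exists>w :: nat set \<Rightarrow> real.
      (\<forall>B\<in>Bset (c+d+2) (d+1). 0 \<le> w B) \<and> (\<Sum>B\<in>Bset (c+d+2) (d+1). w B) = 1 \<and>
      (\<forall>i. real_of_int (x i) = real t * (\<Sum>B\<in>Bset (c+d+2) (d+1). w B * (if i \<in> B then 1 else 0)))}"
    then show "x \<in> Qset (c+d+2) (d+1) t" by (rule lattice_sub)
  next
    fix x assume "x \<in> Qset (c+d+2) (d+1) t"
    then show "x \<in> {x :: nat \<Rightarrow> int. \<exists>w :: nat set \<Rightarrow> real.
      (\<forall>B\<in>Bset (c+d+2) (d+1). 0 \<le> w B) \<and> (\<Sum>B\<in>Bset (c+d+2) (d+1). w B) = 1 \<and>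
      (\<forall>i. real_of_int (x i) = real t * (\<Sum>B\<in>Bset (c+d+2) (d+1). w B * (if i \<in> B then 1 else 0)))}"
      using lattice_sup[OF assms, of "c+d+2" x "d+1"] by simp
  qed
  then have "iseq [1,1,c,d] t = card (Qset (c+d+2) (d+1) t)"
    unfolding iseq_def polytope_lattice_count_def bs by simp
  also have "\<dots> = card (Lq t (c+d+2) (d+1))" by (rule card_Qset) simp
  finally show ?thesis .
qed

theorem corollary4p3:
  fixes a b t :: nat
  assumes "a \<ge> 1" and "b \<ge> 2" and "t \<ge> 1"
  shows "int (iseq [1, 1, a, b] t) + int (iseq [1, 1, b - 1, a + 1] t)
           = (int t + 2) * F (a + 1) b 0 t"
proof -
  define f where "f s = int (Lc t (a+b) (int t * int b - int s))" for s
  have e1: "iseq [1,1,a,b] t = card (Lq t (Suc (Suc (a+b))) (b+1))"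
    using iseq_char[OF assms(3), of a b] by (simp add: add.commute add.left_commute)
  have e2: "iseq [1,1,b-1,a+1] t = card (Lq t (Suc (Suc (a+b))) (a+2))"
    using iseq_char[OF assms(3), of "b-1" "a+1"] assms(2) by (simp add: add.commute add.left_commute)
  have "int (iseq [1, 1, a, b] t) + int (iseq [1, 1, b - 1, a + 1] t)
      = (\<Sum>p\<in>{0..t}. \<Sum>q\<in>{0..t}. if t \<le> p+q then
            int (Lc t (a+b) (int t * int (b+1) - int p - int q))
          + int (Lc t (a+b) (int t * int (a+2) - int p - int q)) else 0)"
    unfolding e1 e2 card_Lq by (simp add: sum.distrib[symmetric] of_nat_sum if_distrib cong: if_cong)
  also have "\<dots> = (\<Sum>p\<in>{0..t}. \<Sum>q\<in>{0..t}. if t \<le> p+q then f (p+q-t) + f (2*t-p-q) else 0)"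
  proof (intro sum.cong refl)
    fix p q assume p: "p \<in> {0..t}" and q: "q \<in> {0..t}"
    show "(if t \<le> p+q then
            int (Lc t (a+b) (int t * int (b+1) - int p - int q))
          + int (Lc t (a+b) (int t * int (a+2) - int p - int q)) else 0)
        = (if t \<le> p+q then f (p+q-t) + f (2*t-p-q) else 0)"
    proof (cases "t \<le> p+q")
      case True
      have 1: "int t * int (b+1) - int p - int q = int t * int b - int (p+q-t)"
        using True by (simp add: of_nat_diff algebra_simps)
      have "Lc t (a+b) (int t * int (a+2) - int p - int q)
          = Lc t (a+b) (int t * int (a+b) - (int t * int (a+2) - int p - int q))"
        by (rule Lc_sym)
      also have "int t * int (a+b) - (int t * int (a+2) - int p - int q) = int t * int b - int (2*t-p-q)"
        using p q by (simp add: of_nat_diff algebra_simps)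
      finally have 2: "Lc t (a+b) (int t * int (a+2) - int p - int q) = Lc t (a+b) (int t * int b - int (2*t-p-q))" .
      show ?thesis unfolding f_def by (simp only: 1 2 True if_True)
    qed simp
  qed
  also have "\<dots> = (int t + 2) * (\<Sum>s\<in>{0..t}. f s)" by (rule main_identity)
  also have "(\<Sum>s\<in>{0..t}. f s) = int (Lc t (Suc (a+b)) (int t * int b))"
    unfolding f_def by (simp add: Lc_Suc of_nat_sum)
  also have "\<dots> = F (a + 1) b 0 t"
    using Lc_Gf[of "Suc (a+b)" t "int t * int b"] F_Gf[of a b t] by simp
  finally show ?thesis .
qed


end
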